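(* Let $L\le\mathrm{Aff}(\mathbb{R}^n)$ be a subgroup whose centralizer in $\mathrm{Aff}(\mathbb{R}^n)$ acts transitively on an open subset $U\subseteq\mathbb{R}^n$. If $L$ preserves $U$, then the action of $L$ on $U$ is proper if and only if $L$ is a closed subgroup of $\mathrm{Aff}(\mathbb{R}^n)$.
   Context: $\mathrm{Aff}(\mathbb{R}^n)$ is the Lie group of affine transformations of $\mathbb{R}^n$. An action of a topological group $L$ on a locally compact Hausdorff space $X$ is proper if for every compact $K\subseteq X$ the set $\{\ell\in L\mid \ell K\cap K\neq\emptyset\}$ is compact. *)

theory Defs
  imports "HOL-Analysis.Analysis"
begin

text \<open>Aff(R^n) carries the subspace topology of the product
  real^'n^'n \<times> real^'n (the standard Lie group topology).\<close>

type_synonym 'n aff = "(real^'n^'n) \<times> (real^'n)"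

definition Aff :: "'n::finite aff set" where
  "Aff = {(A, b). invertible A}"

definition aff_app :: "'n::finite aff \<Rightarrow> real^'n \<Rightarrow> real^'n" where
  "aff_app g x = fst g *v x + snd g"

definition aff_mult :: "'n::finite aff \<Rightarrow> 'n aff \<Rightarrow> 'n aff" where
  "aff_mult g h = (fst g ** fst h, fst g *v snd h + snd g)"

definition aff_id :: "'n::finite aff" where
  "aff_id = (mat 1, 0)"

definition aff_inv :: "'n::finite aff \<Rightarrow> 'n aff" where
  "aff_inv g = (matrix_inv (fst g), - (matrix_inv (fst g) *v snd g))"

definition aff_subgroup :: "'n::finite aff set \<Rightarrow> bool" where
  "aff_subgroup L \<longleftrightarrow> L \<subseteq> Aff \<and> aff_id \<in> L \<and>
     (\<forall>g\<in>L. \<forall>h\<in>L. aff_mult g h \<in> L) \<and> (\<forall>g\<in>L. aff_inv g \<in> L)"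

definition aff_centralizer :: "'n::finite aff set \<Rightarrow> 'n aff set" where
  "aff_centralizer L = {g \<in> Aff. \<forall>l\<in>L. aff_mult g l = aff_mult l g}"

definition acts_transitively_on :: "'n::finite aff set \<Rightarrow> (real^'n) set \<Rightarrow> bool" where
  "acts_transitively_on G U \<longleftrightarrow> U \<noteq> {} \<and> (\<forall>g\<in>G. aff_app g ` U \<subseteq> U) \<and>
     (\<forall>x\<in>U. \<forall>y\<in>U. \<exists>g\<in>G. aff_app g x = y)"

text \<open>Proper action of L on U (compactness of a subset of L in the subspace topology of L
  coincides with compactness in the ambient space).\<close>
definition proper_action_on :: "'n::finite aff set \<Rightarrow> (real^'n) set \<Rightarrow> bool" where
  "proper_action_on L U \<longleftrightarrow>
     (\<forall>K. K \<subseteq> U \<and> compact K \<longrightarrow> compact {l \<in> L. aff_app l ` K \<inter> K \<noteq> {}})"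

end

theory Submission
  imports Defs
begin

lemma inv_props:
  fixes A :: "real^'n^'n"
  assumes "invertible A"
  shows "A ** matrix_inv A = mat 1 \<and> matrix_inv A ** A = mat 1"
  using assms unfolding matrix_inv_def invertible_def by (rule someI_ex)

lemma tendsto_mv:
  fixes f :: "'a \<Rightarrow> real^'n^'m" and g :: "'a \<Rightarrow> real^'n"
  assumes "(f \<longlongrightarrow> A) F" "(g \<longlongrightarrow> x) F"
  shows "((\<lambda>t. f t *v g t) \<longlongrightarrow> A *v x) F"
proof (rule vec_tendstoI)
  fix i
  show "((\<lambda>t. (f t *v g t) $ i) \<longlongrightarrow> (A *v x) $ i) F"
    unfolding matrix_vector_mult_def using assms
    by (auto intro!: tendsto_intros)
qed

lemma cont_mv:
  fixes f :: "'a::topological_space \<Rightarrow> real^'n^'m" and g :: "'a \<Rightarrow> real^'n"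
  assumes "continuous_on S f" "continuous_on S g"
  shows "continuous_on S (\<lambda>t. f t *v g t)"
  using assms unfolding continuous_on_def by (auto intro: tendsto_mv)

lemma cont_mm:
  fixes f :: "'a::topological_space \<Rightarrow> real^'n^'m" and g :: "'a \<Rightarrow> real^'k^'n"
  assumes "continuous_on S f" "continuous_on S g"
  shows "continuous_on S (\<lambda>t. f t ** g t)"
proof -
  have e: "(\<lambda>t. f t ** g t) = (\<lambda>t. \<chi> i j. \<Sum>k\<in>UNIV. f t $ i $ k * g t $ k $ j)"
    by (simp add: matrix_matrix_mult_def)
  show ?thesis unfolding e using assms by (auto intro!: continuous_intros)
qed

lemma mv_neg: "(A::real^'n^'m) *v (- x) = - (A *v x)"
  by (simp add: matrix_vector_mult_def vec_eq_iff sum_negf)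

lemma aff_app_inv:
  assumes "invertible (fst g)"
  shows "aff_app g (aff_app (aff_inv g) u) = u" "aff_app (aff_inv g) (aff_app g u) = u"
  using inv_props[OF assms]
  by (auto simp: aff_app_def aff_inv_def matrix_vector_mul_assoc matrix_vector_right_distrib
      matrix_vector_mult_diff_distrib mv_neg)

lemma cont_app: "continuous_on S (aff_app g)"
  unfolding aff_app_def by (auto intro!: continuous_intros)


lemma mm_diff_l: "((A::real^'n^'m) - B) ** (C::real^'k^'n) = A ** C - B ** C"
  by (simp add: matrix_matrix_mult_def vec_eq_iff sum_subtractf left_diff_distrib)

lemma mm_diff_r: "(C::real^'n^'m) ** ((A::real^'k^'n) - B) = C ** A - C ** B"
  by (simp add: matrix_matrix_mult_def vec_eq_iff sum_subtractf right_diff_distrib)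

lemma mm_scale_l: "(r *\<^sub>R (A::real^'n^'m)) ** (B::real^'k^'n) = r *\<^sub>R (A ** B)"
  by (simp add: matrix_matrix_mult_def vec_eq_iff sum_distrib_left mult.assoc)

lemma mm_scale_r: "(A::real^'n^'m) ** (r *\<^sub>R (B::real^'k^'n)) = r *\<^sub>R (A ** B)"
  by (simp add: matrix_matrix_mult_def vec_eq_iff sum_distrib_left mult.left_commute)

definition Wset :: "'n::finite aff set \<Rightarrow> 'n aff set" where
  "Wset C = {w. \<forall>c\<in>C. fst w ** fst c = fst c ** fst w \<and> fst w *v snd c + snd w = fst c *v snd w}"

lemma L_in_W:
  assumes "l \<in> L"
  shows "(fst l - mat 1, snd l) \<in> Wset (aff_centralizer L)"
  unfolding Wset_def
proof (intro CollectI ballI conjI)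
  fix c assume "c \<in> aff_centralizer L"
  then have "aff_mult c l = aff_mult l c" using assms by (auto simp: aff_centralizer_def)
  then have e1: "fst c ** fst l = fst l ** fst c" and e2: "fst c *v snd l + snd c = fst l *v snd c + snd l"
    by (auto simp: aff_mult_def)
  show "fst (fst l - mat 1, snd l) ** fst c = fst c ** fst (fst l - mat 1, snd l)"
    using e1 by (simp add: mm_diff_l mm_diff_r)
  show "fst (fst l - mat 1, snd l) *v snd c + snd (fst l - mat 1, snd l) = fst c *v snd (fst l - mat 1, snd l)"
    using e2 by (simp add: matrix_vector_mult_diff_rdistrib algebra_simps)
qed

lemma W_scale:
  assumes "w \<in> Wset C"
  shows "r *\<^sub>R w \<in> Wset C"
  using assms unfolding Wset_def
  by (auto simp: mm_scale_l mm_scale_r scaleR_matrix_vector_assoc[symmetric] matrix_vector_mult_scaleR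
      scaleR_right_distrib[symmetric])

lemma W_closed: "closed (Wset C)"
proof -
  have eq: "Wset C = (\<Inter>c\<in>C. {w. fst w ** fst c - fst c ** fst w = 0} \<inter>
                    {w. fst w *v snd c + snd w - fst c *v snd w = 0})"
    unfolding Wset_def by auto
  have c1: "closed {w::'a aff. fst w ** fst c - fst c ** fst w = 0}" for c :: "'a::finite aff"
  proof -
    have "continuous_on UNIV (\<lambda>w::'a aff. fst w ** fst c - fst c ** fst w)"
      by (intro continuous_intros cont_mm)
    from closed_vimage[OF closed_singleton this] show ?thesis by (simp only: vimage_def singleton_iff)
  qed
  have c2: "closed {w::'a aff. fst w *v snd c + snd w - fst c *v snd w = 0}" for c :: "'a::finite aff"
  proof -
    have "continuous_on UNIV (\<lambda>w::'a aff. fst w *v snd c + snd w - fst c *v snd w)"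
      by (intro continuous_intros cont_mv)
    from closed_vimage[OF closed_singleton this] show ?thesis by (simp only: vimage_def singleton_iff)
  qed
  show ?thesis unfolding eq by (intro closed_INT ballI closed_Int c1 c2)
qed

lemma W_zero:
  assumes tr: "acts_transitively_on C U" and U: "open U" and w: "w \<in> Wset C"
    and y: "y \<in> U" and e: "fst w *v y + snd w = 0"
  shows "w = 0"
proof -
  have all: "fst w *v z + snd w = 0" if z: "z \<in> U" for z
  proof -
    obtain c where c: "c \<in> C" "aff_app c y = z" using tr y z unfolding acts_transitively_on_def by blast
    have m: "fst w ** fst c = fst c ** fst w" "fst w *v snd c + snd w = fst c *v snd w"
      using w c(1) unfolding Wset_def by auto
    have "fst w *v z + snd w = (fst w ** fst c) *v y + (fst w *v snd c + snd w)"
      unfolding c(2)[symmetric] aff_app_def by (simp add: matrix_vector_right_distrib matrix_vector_mul_assoc)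
    also have "\<dots> = fst c *v (fst w *v y + snd w)"
      using m by (simp add: matrix_vector_right_distrib matrix_vector_mul_assoc)
    also have "\<dots> = 0" using e by simp
    finally show ?thesis .
  qed
  obtain r where r: "r > 0" "ball y r \<subseteq> U" using U y open_contains_ball by blast
  have M: "fst w *v x = 0" for x
  proof -
    define t where "t = r / (2 * (norm x + 1))"
    have n1: "norm x + 1 > 0" by (smt (verit) norm_ge_zero)
    have q: "norm x / (2 * (norm x + 1)) < 1" using n1 by (simp add: divide_less_eq)
    have t0: "t > 0" unfolding t_def using r(1) n1 by simp
    have "t * norm x = r * (norm x / (2 * (norm x + 1)))" unfolding t_def by simp
    also have "\<dots> < r * 1" using q r(1) by (rule mult_strict_left_mono)
    also have "\<dots> = r" by simp
    finally have t: "t > 0" "t * norm x < r" using t0 by auto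
    have "y + t *\<^sub>R x \<in> U" using r t by (auto simp: dist_norm intro!: subsetD[OF r(2)])
    then have "fst w *v (y + t *\<^sub>R x) + snd w = 0" by (rule all)
    moreover have "t *\<^sub>R (fst w *v x) = (fst w *v (y + t *\<^sub>R x) + snd w) - (fst w *v y + snd w)"
      by (simp add: matrix_vector_right_distrib matrix_vector_mult_scaleR)
    ultimately have "t *\<^sub>R (fst w *v x) = 0" using e by simp
    then show ?thesis using t by simp
  qed
  have "fst w = 0" using M by (simp add: matrix_eq matrix_vector_mult_0)
  moreover have "snd w = 0" using e M by simp
  ultimately show ?thesis by (simp add: prod_eq_iff)
qed

lemma dir1:
  fixes L :: "'n::finite aff set" and U :: "(real^'n) set"
  assumes LA: "L \<subseteq> Aff" and U: "open U" "U \<noteq> {}" and pres: "\<forall>l\<in>L. aff_app l ` U \<subseteq> U"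
    and pr: "proper_action_on L U"
  shows "closedin (top_of_set Aff) L"
proof -
  have "Aff \<inter> closure L \<subseteq> L"
  proof
    fix g assume g: "g \<in> Aff \<inter> closure L"
    then obtain l where l: "\<And>n. l n \<in> L" "l \<longlonglongrightarrow> g" using closure_sequential by blast
    have lim: "\<And>y. (\<lambda>n. aff_app (l n) y) \<longlonglongrightarrow> aff_app g y"
    proof -
      fix y
      have a: "(\<lambda>n. fst (l n)) \<longlonglongrightarrow> fst g" using tendsto_fst[OF l(2)] .
      have b: "(\<lambda>n. snd (l n)) \<longlonglongrightarrow> snd g" using tendsto_snd[OF l(2)] .
      have "(\<lambda>n. fst (l n) *v y) \<longlonglongrightarrow> fst g *v y" using tendsto_mv[OF a tendsto_const] .
      from tendsto_add[OF this b] show "(\<lambda>n. aff_app (l n) y) \<longlonglongrightarrow> aff_app g y"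
        unfolding aff_app_def .
    qed
    from U obtain y where y: "y \<in> U" by auto
    have inU: "\<forall>n. aff_app (l n) y \<in> U" using l(1) pres y by blast
    have "aff_app g y \<in> closure U"
      unfolding closure_sequential by (rule exI[of _ "\<lambda>n. aff_app (l n) y"]) (use inU lim[of y] in blast)
    have invg: "invertible (fst g)" using g by (auto simp: Aff_def)
    define V where "V = aff_app (aff_inv g) -` U"
    have "open V" unfolding V_def by (rule open_vimage[OF U(1) cont_app])
    have "aff_app g y \<in> V" unfolding V_def using aff_app_inv(2)[OF invg] y by simp
    then have "V \<inter> closure U \<noteq> {}" using \<open>aff_app g y \<in> closure U\<close> by blast
    then obtain u where u: "u \<in> V" "u \<in> U" using open_Int_closure_eq_empty[OF \<open>open V\<close>] by blast
    define z where "z = aff_app (aff_inv g) u"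
    have z: "z \<in> U" "aff_app g z \<in> U" using u aff_app_inv(1)[OF invg] unfolding z_def V_def by auto
    define K where "K = insert z (insert (aff_app g z) (range (\<lambda>n. aff_app (l n) z)))"
    have "compact K" unfolding K_def
      by (intro compact_insert compact_sequence_with_limit lim)
    moreover have "K \<subseteq> U" unfolding K_def using z pres l(1) by blast
    ultimately have "compact {m \<in> L. aff_app m ` K \<inter> K \<noteq> {}}" using pr
      unfolding proper_action_on_def by blast
    then have cl: "closed {m \<in> L. aff_app m ` K \<inter> K \<noteq> {}}" by (rule compact_imp_closed)
    have "\<And>n. l n \<in> {m \<in> L. aff_app m ` K \<inter> K \<noteq> {}}"
      using l(1) unfolding K_def by blast
    then have "g \<in> {m \<in> L. aff_app m ` K \<inter> K \<noteq> {}}"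
      using closed_sequentially[OF cl] l(2) by blast
    then show "g \<in> L" by blast
  qed
  then have "L = Aff \<inter> closure L" using LA closure_subset by blast
  then show ?thesis unfolding closedin_closed by blast
qed


lemma dir2:
  fixes L :: "'n::finite aff set" and U :: "(real^'n) set"
  assumes sub: "aff_subgroup L" and U: "open U" and tr: "acts_transitively_on (aff_centralizer L) U"
    and cl: "closedin (top_of_set Aff) L"
  shows "proper_action_on L U"
  unfolding proper_action_on_def
proof (intro allI impI)
  fix K assume K: "K \<subseteq> U \<and> compact K"
  define C where "C = aff_centralizer L"
  define S where "S = {l \<in> L. aff_app l ` K \<inter> K \<noteq> {}}"
  have LA: "L \<subseteq> Aff" and Linv: "\<And>l. l\<in>L \<Longrightarrow> aff_inv l \<in> L" using sub by (auto simp: aff_subgroup_def)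
  have "\<exists>m>0. \<forall>w\<in>Wset C. \<forall>y\<in>K. m * norm w \<le> norm (fst w *v y + snd w)"
  proof (cases "Wset C \<inter> sphere 0 1 = {} \<or> K = {}")
    case True
    show ?thesis
    proof (intro exI[of _ 1] conjI ballI)
      fix w y assume w: "w \<in> Wset C" "y \<in> K"
      have "w = 0"
      proof (rule ccontr)
        assume "w \<noteq> 0"
        then have "(1/norm w) *\<^sub>R w \<in> Wset C \<inter> sphere 0 1" using W_scale[OF w(1)] by auto
        then show False using True w(2) by auto
      qed
      then show "1 * norm w \<le> norm (fst w *v y + snd w)" by simp
    qed simp
  next
    case False
    define \<phi> where "\<phi> = (\<lambda>p::('n aff) \<times> (real^'n). norm (fst (fst p) *v snd p + snd (fst p)))"
    have cpt: "compact ((Wset C \<inter> sphere 0 1) \<times> K)"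
      using K W_closed by (intro compact_Times closed_Int_compact) auto
    have cont: "continuous_on ((Wset C \<inter> sphere 0 1) \<times> K) \<phi>"
      unfolding \<phi>_def by (intro continuous_intros cont_mv)
    obtain p0 where p0: "p0 \<in> (Wset C \<inter> sphere 0 1) \<times> K" "\<forall>p \<in> (Wset C \<inter> sphere 0 1) \<times> K. \<phi> p0 \<le> \<phi> p"
      using continuous_attains_inf[OF cpt _ cont] False by auto
    have "\<phi> p0 > 0"
    proof -
      have "fst p0 \<noteq> 0" using p0(1) by auto
      then have "fst (fst p0) *v snd p0 + snd (fst p0) \<noteq> 0"
        using W_zero[OF tr U, of "fst p0" "snd p0"] p0(1) K unfolding C_def by auto
      then show ?thesis unfolding \<phi>_def by simp
    qed
    show ?thesis
    proof (intro exI[of _ "\<phi> p0"] conjI ballI)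
      fix w y assume w: "w \<in> Wset C" "y \<in> K"
      show "\<phi> p0 * norm w \<le> norm (fst w *v y + snd w)"
      proof (cases "w = 0")
        case True then show ?thesis by simp
      next
        case False
        define w' where "w' = (1/norm w) *\<^sub>R w"
        have "w' \<in> Wset C \<inter> sphere 0 1" using W_scale[OF w(1)] False unfolding w'_def by auto
        then have "\<phi> p0 \<le> \<phi> (w', y)" using p0(2) w(2) by auto
        also have "\<phi> (w', y) = norm (fst w *v y + snd w) / norm w"
          unfolding \<phi>_def w'_def using False
          by (simp add: scaleR_matrix_vector_assoc[symmetric] scaleR_right_distrib[symmetric])
        finally show ?thesis using False by (simp add: field_simps)
      qed
    qed fact
  qed
  then obtain m where m: "m > 0" "\<And>w y. w \<in> Wset C \<Longrightarrow> y \<in> K \<Longrightarrow> m * norm w \<le> norm (fst w *v y + snd w)"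
    by blast
  obtain B where B: "\<And>x. x \<in> K \<Longrightarrow> norm x \<le> B" using K compact_imp_bounded bounded_iff by metis
  define R where "R = 2*B/m + norm (mat 1 :: real^'n^'n)"
  have Sbd: "norm l \<le> R" if l: "l \<in> S" for l
  proof -
    obtain k where k: "k \<in> K" "aff_app l k \<in> K" using l unfolding S_def by auto
    define w where "w = (fst l - mat 1, snd l)"
    have w: "w \<in> Wset C" using L_in_W[of l L] l unfolding w_def C_def S_def by auto
    have "fst w *v k + snd w = aff_app l k - k" unfolding w_def aff_app_def
      by (simp add: matrix_vector_mult_diff_rdistrib)
    then have "m * norm w \<le> norm (aff_app l k - k)" using m(2)[OF w k(1)] by simp
    also have "\<dots> \<le> 2*B" using B[OF k(1)] B[OF k(2)] norm_triangle_ineq4[of "aff_app l k" k] by linarith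
    finally have "norm w \<le> 2*B/m" using m(1) by (simp add: field_simps)
    moreover have "l = w + (mat 1, 0)" unfolding w_def by simp
    then have "norm l \<le> norm w + norm ((mat 1, 0)::'n aff)" by (metis norm_triangle_ineq)
    moreover have "norm ((mat 1, 0)::'n aff) = norm (mat 1 :: real^'n^'n)" by (simp add: norm_Pair)
    ultimately show ?thesis unfolding R_def by linarith
  qed
  obtain T where T: "closed T" "L = Aff \<inter> T" using cl unfolding closedin_closed by blast
  define f1 where "f1 = (\<lambda>p :: 'n aff \<times> 'n aff \<times> (real^'n). fst (fst p) ** fst (fst (snd p)))"
  define f2 where "f2 = (\<lambda>p :: 'n aff \<times> 'n aff \<times> (real^'n). aff_app (fst p) (snd (snd p)))"
  define Q where "Q = (T \<times> T \<times> K) \<inter> f1 -` {mat 1} \<inter> f2 -` K \<inter> (cball 0 R \<times> cball 0 R \<times> UNIV)"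
  have cK: "closed K" using K compact_imp_closed by blast
  have cf1: "continuous_on UNIV f1" unfolding f1_def by (intro continuous_intros cont_mm)
  have cf2: "continuous_on UNIV f2" unfolding f2_def aff_app_def by (intro continuous_intros cont_mv)
  have "closed Q" unfolding Q_def
    by (intro closed_Int closed_Times closed_vimage T(1) cK cf1 cf2 closed_singleton closed_cball closed_UNIV)
  moreover have "bounded Q"
  proof (rule bounded_subset)
    show "bounded (cball 0 R \<times> cball 0 R \<times> K)"
      using K compact_imp_bounded by (intro bounded_Times bounded_cball) blast+
    show "Q \<subseteq> cball 0 R \<times> cball 0 R \<times> K" unfolding Q_def by (auto simp: mem_Times_iff)
  qed
  ultimately have "compact Q" by (simp add: compact_eq_bounded_closed)
  have memQ: "(g, h, a) \<in> Q \<longleftrightarrow> g \<in> T \<and> h \<in> T \<and> a \<in> K \<and> fst g ** fst h = mat 1 \<and>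
      aff_app g a \<in> K \<and> norm g \<le> R \<and> norm h \<le> R" for g h a
    unfolding Q_def f1_def f2_def by (simp add: dist_norm)
  have "S = fst ` Q"
  proof
    show "S \<subseteq> fst ` Q"
    proof
      fix l assume l: "l \<in> S"
      have lL: "l \<in> L" and "aff_app l ` K \<inter> K \<noteq> {}" using l unfolding S_def by simp_all
      then obtain k where k: "k \<in> K" "aff_app l k \<in> K" by blast
      have "l \<in> Aff" using lL LA by (rule subsetD[rotated])
      then have inv: "invertible (fst l)" by (cases l) (simp add: Aff_def)
      have iL: "aff_inv l \<in> L" using Linv lL .
      have e: "aff_app (aff_inv l) (aff_app l k) = k" using aff_app_inv(2)[OF inv] .
      have "k \<in> aff_app (aff_inv l) ` K \<inter> K" using k e by (metis IntI image_eqI)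
      then have iS: "aff_inv l \<in> S" using iL unfolding S_def by blast
      have "fst l ** fst (aff_inv l) = mat 1" using inv_props[OF inv] by (simp add: aff_inv_def)
      moreover have "l \<in> T" "aff_inv l \<in> T" using lL iL T(2) by blast+
      ultimately have "(l, aff_inv l, k) \<in> Q" unfolding memQ
        using k Sbd[OF l] Sbd[OF iS] by blast
      then show "l \<in> fst ` Q" by (metis fst_conv image_eqI)
    qed
    show "fst ` Q \<subseteq> S"
    proof
      fix g assume "g \<in> fst ` Q"
      then obtain p where "p \<in> Q" "g = fst p" by blast
      then obtain h a where p: "(g, h, a) \<in> Q" by (metis prod.collapse)
      have pp: "g \<in> T" "fst g ** fst h = mat 1" "a \<in> K" "aff_app g a \<in> K" using p unfolding memQ by blast+
      have "invertible (fst g)" unfolding invertible_right_inverse using pp(2) by blast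
      then have "g \<in> Aff" by (cases g) (simp add: Aff_def)
      then have gL: "g \<in> L" using pp(1) T(2) by blast
      have "aff_app g a \<in> aff_app g ` K \<inter> K" using pp(3,4) by blast
      then show "g \<in> S" using gL unfolding S_def by blast
    qed
  qed
  then show "compact {l \<in> L. aff_app l ` K \<inter> K \<noteq> {}}" unfolding S_def[symmetric]
    using compact_continuous_image[OF continuous_on_fst[OF continuous_on_id] \<open>compact Q\<close>] by simp
qed

theorem proposition7p3:
  fixes L :: "'n::finite aff set" and U :: "(real^'n) set"
  assumes "aff_subgroup L"
    and "open U"
    and "acts_transitively_on (aff_centralizer L) U"
    and "\<forall>l\<in>L. aff_app l ` U \<subseteq> U"
  shows "proper_action_on L U \<longleftrightarrow> closedin (top_of_set Aff) L"
proof
  assume "proper_action_on L U"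
  moreover have "L \<subseteq> Aff" using assms(1) unfolding aff_subgroup_def by (rule conjunct1)
  moreover have "U \<noteq> {}" using assms(3) unfolding acts_transitively_on_def by (rule conjunct1)
  ultimately show "closedin (top_of_set Aff) L"
    using dir1[of L U] assms(2,4) by simp
next
  assume "closedin (top_of_set Aff) L"
  then show "proper_action_on L U" by (rule dir2[OF assms(1,2,3)])
qed

end
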